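(* Let $H$ be a real Hilbert space and $\{C_\alpha\}_{\alpha\in\Omega}$ ($|\Omega|\ge2$) a family of closed convex subsets of $H$ whose intersection $C=\bigcap_\alpha C_\alpha$ is nonempty and has affine hull dense in $H$. Then for every starting element $x_0\in H$ and every sequence $\{t_n\}\subset[0,1]$ of weakness parameters, every sequence $\{x_n\}$ of remote projections onto $\{C_\alpha\}$ converges weakly.
   Context: $P_\alpha$ is the metric projection onto $C_\alpha$. A sequence of remote projections with weakness parameters $t_n\in[0,1]$ starting at $x_0$: $x_{n+1}=P_{\alpha(n)}x_n$, where $\alpha(n)\in\Omega$ is any index with $\mathrm{dist}(x_n,C_{\alpha(n)})\ge t_n\sup_\alpha\mathrm{dist}(x_n,C_\alpha)$; if $t_n=1$ for some $n$ it is required that $\max_\alpha\mathrm{dist}(x,C_\alpha)$ is attained for every $x\in H$. *)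

theory Defs
  imports "HOL-Analysis.Analysis"
begin

definition weakly_convergent :: "(nat \<Rightarrow> 'a::real_inner) \<Rightarrow> bool" where
  "weakly_convergent x \<longleftrightarrow> (\<exists>y. \<forall>z. (\<lambda>n. x n \<bullet> z) \<longlonglongrightarrow> y \<bullet> z)"

text \<open>Metric projection onto a set: the (unique, for closed convex nonempty sets in a
  Hilbert space) nearest point. The library closest_point needs heine_borel.\<close>
definition metric_proj :: "'a::real_inner set \<Rightarrow> 'a \<Rightarrow> 'a" where
  "metric_proj S a = (THE y. y \<in> S \<and> (\<forall>z\<in>S. dist a y \<le> dist a z))"

definition remote_projections ::
  "'i set \<Rightarrow> ('i \<Rightarrow> 'a::real_inner set) \<Rightarrow> (nat \<Rightarrow> real) \<Rightarrow> (nat \<Rightarrow> 'i) \<Rightarrow> (nat \<Rightarrow> 'a) \<Rightarrow> bool"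
where
  "remote_projections \<Omega> C t alpha x \<longleftrightarrow>
     (\<forall>n. alpha n \<in> \<Omega>
        \<and> infdist (x n) (C (alpha n)) \<ge> t n * (SUP \<beta>\<in>\<Omega>. infdist (x n) (C \<beta>))
        \<and> x (Suc n) = metric_proj (C (alpha n)) (x n))
   \<and> ((\<exists>n. t n = 1) \<longrightarrow> (\<forall>y. \<exists>\<beta>\<in>\<Omega>. \<forall>\<gamma>\<in>\<Omega>. infdist y (C \<gamma>) \<le> infdist y (C \<beta>)))"

end

theory Submission
  imports Defs
begin

lemma parallelogram_aux:
  fixes a u v :: "'a::real_inner"
  shows "(norm (u - v))^2 = 2*(norm (a - u))^2 + 2*(norm (a - v))^2 - 4*(norm (a - (1/2) *\<^sub>R (u + v)))^2"
  unfolding power2_norm_eq_inner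
  by (simp add: inner_diff_left inner_diff_right inner_add_left inner_add_right inner_commute algebra_simps)

lemma proj_exists:
  fixes S :: "'a::{real_inner,complete_space} set"
  assumes cl: "closed S" and cv: "convex S" and ne: "S \<noteq> {}"
  shows "\<exists>p\<in>S. \<forall>z\<in>S. dist a p \<le> dist a z"
proof -
  define d where "d = Inf (dist a ` S)"
  have bdd: "bdd_below (dist a ` S)" by (rule bdd_belowI[of _ 0]) auto
  have dle: "d \<le> dist a z" if "z \<in> S" for z unfolding d_def using cINF_lower[OF bdd that] .
  have d0: "0 \<le> d" unfolding d_def by (rule cINF_greatest[OF ne]) simp
  have "\<exists>z\<in>S. dist a z < d + 1/(real k + 1)" for k
    using cINF_less_iff[OF ne bdd, of "d + 1/(real k + 1)"] unfolding d_def[symmetric]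
    by (simp add: add_pos_pos)
  then obtain zs where zs: "\<And>k. zs k \<in> S" "\<And>k. dist a (zs k) < d + 1/(real k + 1)"
    by metis
  have key: "(norm (zs k - zs m))^2 \<le> (8*d+4) * (1/(real N + 1))"
    if "k \<ge> N" "m \<ge> N" for k m N
  proof -
    define e where "e = 1/(real N + 1)"
    have e0: "0 < e" "e \<le> 1" unfolding e_def by (auto simp: field_simps)
    have ek: "1/(real k + 1) \<le> e" "1/(real m + 1) \<le> e" unfolding e_def using that
      by (auto simp: field_simps)
    have mid: "(1/2) *\<^sub>R (zs k + zs m) \<in> S"
      using convexD[OF cv zs(1)[of k] zs(1)[of m], of "1/2" "1/2"]
      by (simp add: scaleR_add_right)
    have dm: "d \<le> norm (a - (1/2) *\<^sub>R (zs k + zs m))" using dle[OF mid] by (simp add: dist_norm)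
    have dk: "norm (a - zs k) \<le> d + e" using zs(2)[of k] ek by (simp add: dist_norm)
    have dm2: "norm (a - zs m) \<le> d + e" using zs(2)[of m] ek by (simp add: dist_norm)
    have "(norm (a - zs k))^2 \<le> (d+e)^2" using dk by (simp add: power_mono)
    moreover have "(norm (a - zs m))^2 \<le> (d+e)^2" using dm2 by (simp add: power_mono)
    moreover have "d^2 \<le> (norm (a - (1/2) *\<^sub>R (zs k + zs m)))^2" using dm d0 by (simp add: power_mono)
    ultimately have "(norm (zs k - zs m))^2 \<le> 2*(d+e)^2 + 2*(d+e)^2 - 4*d^2"
      using parallelogram_aux[of "zs k" "zs m" a] by linarith
    also have "\<dots> = 8*d*e + 4*e*e" by (simp add: power2_eq_square algebra_simps)
    also have "\<dots> \<le> 8*d*e + 4*e" using e0 by (simp add: mult_left_le)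
    finally show ?thesis unfolding e_def[symmetric] by (simp add: algebra_simps)
  qed
  have "Cauchy zs"
  proof (unfold Cauchy_def, intro allI impI)
    fix e :: real assume e: "e > 0"
    obtain N :: nat where N: "(8*d+4) / (e^2) < real N + 1"
      using reals_Archimedean2 by (metis add.commute add_strict_increasing zero_less_one less_eq_real_def)
    have "(8*d+4) * (1/(real N + 1)) < e^2"
      using N e d0 by (simp add: field_simps)
    then have "\<forall>m\<ge>N. \<forall>n\<ge>N. dist (zs m) (zs n) < e"
    proof (intro allI impI)
      fix m n assume mn: "m \<ge> N" "n \<ge> N"
      have "(norm (zs m - zs n))^2 < e^2"
        using key[OF mn] \<open>(8*d+4) * (1/(real N + 1)) < e^2\<close> by linarith
      then show "dist (zs m) (zs n) < e"
        using e by (simp add: dist_norm power_less_imp_less_base)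
    qed
    then show "\<exists>M. \<forall>m\<ge>M. \<forall>n\<ge>M. dist (zs m) (zs n) < e" by blast
  qed
  then obtain p where p: "zs \<longlonglongrightarrow> p" using Cauchy_convergent convergent_def by blast
  have pS: "p \<in> S" using closed_sequentially[OF cl] zs(1) p by blast
  have lim1: "(\<lambda>k. dist a (zs k)) \<longlonglongrightarrow> dist a p" by (intro tendsto_intros p)
  have lim2: "(\<lambda>k. d + 1/(real k + 1)) \<longlonglongrightarrow> d + 0"
    using LIMSEQ_inverse_real_of_nat_add[of d] by (simp add: inverse_eq_divide add.commute)
  have "dist a p \<le> d"
    using LIMSEQ_le[OF lim1 lim2] zs(2) less_imp_le by auto
  then show ?thesis using pS dle by (meson order_trans)
qed


lemma metric_proj_props:
  fixes S :: "'a::{real_inner,complete_space} set"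
  assumes cl: "closed S" and cv: "convex S" and ne: "S \<noteq> {}"
  shows "metric_proj S a \<in> S \<and> (\<forall>z\<in>S. dist a (metric_proj S a) \<le> dist a z)"
proof -
  obtain p where p: "p \<in> S" "\<forall>z\<in>S. dist a p \<le> dist a z" using proj_exists[OF assms] by blast
  have "\<exists>!y. y \<in> S \<and> (\<forall>z\<in>S. dist a y \<le> dist a z)"
    using p any_closest_point_unique[OF cv cl] by blast
  then show ?thesis unfolding metric_proj_def by (rule theI')
qed

lemma metric_proj_dot:
  fixes S :: "'a::{real_inner,complete_space} set"
  assumes cl: "closed S" and cv: "convex S" and ne: "S \<noteq> {}" and z: "z \<in> S"
  shows "(a - metric_proj S a) \<bullet> (z - metric_proj S a) \<le> 0"
  using metric_proj_props[OF assms(1-3), of a] any_closest_point_dot[OF cv cl _ z] by blast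

lemma metric_proj_fejer:
  fixes S :: "'a::{real_inner,complete_space} set"
  assumes cl: "closed S" and cv: "convex S" and c: "c \<in> S"
  shows "norm (metric_proj S a - c) \<le> norm (a - c)"
proof -
  define p where "p = metric_proj S a"
  have d: "(a - p) \<bullet> (c - p) \<le> 0" unfolding p_def using metric_proj_dot[OF cl cv _ c] c by blast
  have "(norm (a - c))^2 = (norm (a - p))^2 + (norm (p - c))^2 - 2 * ((a - p) \<bullet> (c - p))"
    unfolding power2_norm_eq_inner
    by (simp add: inner_diff_left inner_diff_right inner_commute algebra_simps)
  then have "(norm (p - c))^2 \<le> (norm (a - c))^2" using d by (smt (verit) zero_le_power2)
  then show ?thesis unfolding p_def using power2_le_imp_le by fastforce
qed

lemma riesz:
  fixes f :: "'a::{real_inner,complete_space} \<Rightarrow> real"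
  assumes bl: "bounded_linear f"
  shows "\<exists>y. \<forall>z. f z = y \<bullet> z"
proof (cases "\<forall>z. f z = 0")
  case True then show ?thesis by (intro exI[of _ 0]) simp
next
  case False
  then obtain w where w: "f w \<noteq> 0" by blast
  interpret f: bounded_linear f by (rule bl)
  define N where "N = {z. f z = 0}"
  have clN: "closed N" unfolding N_def
    by (intro closed_Collect_eq continuous_intros f.continuous_on)
  have cvN: "convex N" unfolding N_def convex_def by (simp add: f.add f.scale)
  have neN: "N \<noteq> {}" unfolding N_def using f.zero by blast
  define p where "p = metric_proj N w"
  have pN: "p \<in> N" unfolding p_def using metric_proj_props[OF clN cvN neN] by blast
  define u where "u = w - p"
  have fu: "f u = f w" using pN unfolding u_def N_def by (simp add: f.diff)
  have orth: "u \<bullet> n = 0" if n: "n \<in> N" for n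
  proof -
    have "p + n \<in> N" "p - n \<in> N" using pN n unfolding N_def by (auto simp: f.add f.diff)
    from metric_proj_dot[OF clN cvN neN this(1), of w] metric_proj_dot[OF clN cvN neN this(2), of w]
    show ?thesis unfolding p_def[symmetric] u_def[symmetric] by (simp add: inner_diff_right)
  qed
  have uu: "u \<bullet> u \<noteq> 0" using fu w by (auto simp: f.zero)
  have "f z = ((f u / (u \<bullet> u)) *\<^sub>R u) \<bullet> z" for z
  proof -
    have "z - (f z / f u) *\<^sub>R u \<in> N" unfolding N_def using w fu by (simp add: f.diff f.scale)
    from orth[OF this] have "u \<bullet> z = (f z / f u) * (u \<bullet> u)" by (simp add: inner_diff_right)
    then show ?thesis using uu w fu by (simp add: field_simps)
  qed
  then show ?thesis by blast
qed


lemma conv_closed: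
  fixes x :: "nat \<Rightarrow> 'a::real_inner"
  assumes M: "\<And>n. norm (x n) \<le> M" and vk: "\<And>k. convergent (\<lambda>n. x n \<bullet> vs k)" and lim: "vs \<longlonglongrightarrow> v"
  shows "convergent (\<lambda>n. x n \<bullet> v)"
proof -
  have M0: "0 \<le> M" using M[of 0] norm_ge_zero order_trans by blast
  have "Cauchy (\<lambda>n. x n \<bullet> v)"
  proof (unfold Cauchy_def, intro allI impI)
    fix e :: real assume e: "e > 0"
    have "e / (4 * (M + 1)) > 0" using e M0 by simp
    from LIMSEQ_D[OF lim this] obtain k where k: "norm (vs k - v) < e / (4 * (M + 1))" by blast
    have "Cauchy (\<lambda>n. x n \<bullet> vs k)" using vk Cauchy_convergent_iff by blast
    then obtain N where N: "\<forall>m\<ge>N. \<forall>n\<ge>N. dist (x m \<bullet> vs k) (x n \<bullet> vs k) < e/2"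
      unfolding Cauchy_def using e by (meson half_gt_zero)
    have b: "\<bar>x m \<bullet> (v - vs k)\<bar> \<le> e/4" for m
    proof -
      have "\<bar>x m \<bullet> (v - vs k)\<bar> \<le> norm (x m) * norm (v - vs k)" by (rule Cauchy_Schwarz_ineq2)
      also have "\<dots> \<le> M * (e / (4 * (M + 1)))"
        using k M[of m] M0 by (intro mult_mono) (auto simp: norm_minus_commute)
      also have "\<dots> \<le> e/4" using M0 e by (simp add: field_simps)
      finally show ?thesis .
    qed
    show "\<exists>N. \<forall>m\<ge>N. \<forall>n\<ge>N. dist (x m \<bullet> v) (x n \<bullet> v) < e"
    proof (intro exI allI impI)
      fix m n assume mn: "m \<ge> N" "n \<ge> N"
      have "x m \<bullet> v - x n \<bullet> v = x m \<bullet> (v - vs k) + (x m \<bullet> vs k - x n \<bullet> vs k) - x n \<bullet> (v - vs k)"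
        by (simp add: inner_diff_right)
      then show "dist (x m \<bullet> v) (x n \<bullet> v) < e"
        using b[of m] b[of n] N mn by (simp add: dist_real_def) (smt (verit))
    qed
  qed
  then show ?thesis using Cauchy_convergent_iff by blast
qed

theorem mainTheorem7:
  fixes \<Omega> :: "'i set" and C :: "'i \<Rightarrow> 'a::{real_inner, complete_space} set"
    and t :: "nat \<Rightarrow> real" and alpha :: "nat \<Rightarrow> 'i" and x :: "nat \<Rightarrow> 'a"
  assumes "\<exists>a\<in>\<Omega>. \<exists>b\<in>\<Omega>. a \<noteq> b"
    and "\<And>a. a \<in> \<Omega> \<Longrightarrow> closed (C a)"
    and "\<And>a. a \<in> \<Omega> \<Longrightarrow> convex (C a)"
    and "(\<Inter>a\<in>\<Omega>. C a) \<noteq> {}"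
    and "closure (affine hull (\<Inter>a\<in>\<Omega>. C a)) = UNIV"
    and "\<And>n. t n \<in> {0..1}"
    and "remote_projections \<Omega> C t alpha x"
  shows "weakly_convergent x"
proof -
  define K where "K = (\<Inter>a\<in>\<Omega>. C a)"
  have step: "\<And>n. alpha n \<in> \<Omega> \<and> x (Suc n) = metric_proj (C (alpha n)) (x n)"
    using assms(7) unfolding remote_projections_def by blast
  have fej: "norm (x (Suc n) - c) \<le> norm (x n - c)" if c: "c \<in> K" for c n
  proof -
    have "alpha n \<in> \<Omega>" using step by blast
    then show ?thesis using step[of n] metric_proj_fejer[OF assms(2) assms(3) _, of "alpha n" c] c
      unfolding K_def by auto
  qed
  have dec: "antimono (\<lambda>n. norm (x n - c))" if "c \<in> K" for c
    using fej[OF that] by (simp add: antimono_iff_le_Suc)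
  have conv: "convergent (\<lambda>n. (norm (x n - c))^2)" if cK: "c \<in> K" for c
  proof -
    obtain L where "(\<lambda>n. norm (x n - c)) \<longlonglongrightarrow> L"
      using decseq_convergent[OF dec[OF cK], of 0] by auto
    then have "(\<lambda>n. (norm (x n - c))^2) \<longlonglongrightarrow> L^2" by (intro tendsto_intros)
    then show ?thesis unfolding convergent_def by blast
  qed
  obtain c0 where c0: "c0 \<in> K" using assms(4) unfolding K_def by blast
  define M where "M = norm (x 0 - c0) + norm c0"
  have bnd: "norm (x n) \<le> M" for n
  proof -
    have "norm (x n - c0) \<le> norm (x 0 - c0)"
      using dec[OF c0] by (simp add: antimono_def)
    then show ?thesis unfolding M_def using norm_triangle_ineq[of "x n - c0" c0] by simp
  qed
  define V where "V = {v. convergent (\<lambda>n. x n \<bullet> v)}"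
  have subV: "subspace V" unfolding subspace_def V_def
  proof (intro conjI ballI allI)
    show "0 \<in> {v. convergent (\<lambda>n. x n \<bullet> v)}" by (simp add: convergent_const)
  next
    fix u v assume "u \<in> {v. convergent (\<lambda>n. x n \<bullet> v)}" "v \<in> {v. convergent (\<lambda>n. x n \<bullet> v)}"
    then show "u + v \<in> {v. convergent (\<lambda>n. x n \<bullet> v)}"
      by (simp add: inner_add_right convergent_add)
  next
    fix r :: real and u assume "u \<in> {v. convergent (\<lambda>n. x n \<bullet> v)}"
    then show "r *\<^sub>R u \<in> {v. convergent (\<lambda>n. x n \<bullet> v)}"
      by (simp add: convergent_mult_const_iff convergent_const convergent_mult)
  qed
  have diffV: "c - c' \<in> V" if cc: "c \<in> K" "c' \<in> K" for c c'
  proof -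
    have eq: "x n \<bullet> (c - c') = ((norm (x n - c'))^2 - (norm (x n - c))^2 - (norm c')^2 + (norm c)^2) / 2" for n
      unfolding power2_norm_eq_inner
      by (simp add: inner_diff_left inner_diff_right inner_commute algebra_simps)
    obtain L1 L2 where L: "(\<lambda>n. (norm (x n - c'))^2) \<longlonglongrightarrow> L1" "(\<lambda>n. (norm (x n - c))^2) \<longlonglongrightarrow> L2"
      using conv[OF cc(1)] conv[OF cc(2)] unfolding convergent_def by blast
    have "(\<lambda>n. ((norm (x n - c'))^2 - (norm (x n - c))^2 - (norm c')^2 + (norm c)^2) / 2)
       \<longlonglongrightarrow> (L1 - L2 - (norm c')^2 + (norm c)^2) / 2"
      by (intro tendsto_intros L) simp
    then have "convergent (\<lambda>n. ((norm (x n - c'))^2 - (norm (x n - c))^2 - (norm c')^2 + (norm c)^2) / 2)"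
      unfolding convergent_def by blast
    then show ?thesis unfolding V_def by (simp only: eq mem_Collect_eq)
  qed
  have affV: "a - c0 \<in> V" if "a \<in> affine hull K" for a
  proof -
    have "span ((\<lambda>x. -c0 + x) ` (K - {c0})) \<subseteq> V"
      using diffV c0 by (intro span_minimal subV) auto
    then show ?thesis using that affine_hull_span2[OF c0] by auto
  qed
  have allV: "w \<in> V" for w
  proof -
    have "w + c0 \<in> closure (affine hull K)" using assms(5) unfolding K_def by simp
    then obtain as where as: "\<And>k. as k \<in> affine hull K" "as \<longlonglongrightarrow> w + c0"
      unfolding closure_sequential by blast
    have "(\<lambda>k. as k - c0) \<longlonglongrightarrow> w + c0 - c0" by (intro tendsto_intros as(2))
    then have "(\<lambda>k. as k - c0) \<longlonglongrightarrow> w" by simp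
    from conv_closed[of x M, OF bnd _ this] affV[OF as(1)] show ?thesis unfolding V_def by blast
  qed
  define f where "f z = lim (\<lambda>n. x n \<bullet> z)" for z
  have flim: "(\<lambda>n. x n \<bullet> z) \<longlonglongrightarrow> f z" for z
    using allV[of z] unfolding V_def f_def by (simp add: convergent_LIMSEQ_iff)
  have "bounded_linear f"
  proof (rule bounded_linear_intro[of _ M])
    fix u v
    have "(\<lambda>n. x n \<bullet> (u + v)) \<longlonglongrightarrow> f u + f v"
      unfolding inner_add_right by (intro tendsto_intros flim)
    then show "f (u + v) = f u + f v" using flim LIMSEQ_unique by blast
  next
    fix r :: real and u
    have "(\<lambda>n. x n \<bullet> (r *\<^sub>R u)) \<longlonglongrightarrow> r *\<^sub>R f u"
      unfolding inner_scaleR_right by (simp add: tendsto_mult_left flim)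
    then show "f (r *\<^sub>R u) = r *\<^sub>R f u" using flim LIMSEQ_unique by blast
  next
    fix u
    have "(\<lambda>n. \<bar>x n \<bullet> u\<bar>) \<longlonglongrightarrow> \<bar>f u\<bar>" by (intro tendsto_intros flim)
    moreover have "\<bar>x n \<bullet> u\<bar> \<le> norm u * M" for n
    proof -
      have "\<bar>x n \<bullet> u\<bar> \<le> norm (x n) * norm u" by (rule Cauchy_Schwarz_ineq2)
      also have "\<dots> \<le> M * norm u" using bnd[of n] by (simp add: mult_right_mono)
      finally show ?thesis by (simp add: mult.commute)
    qed
    ultimately have "\<bar>f u\<bar> \<le> norm u * M" by (intro LIMSEQ_le_const2) auto
    then show "norm (f u) \<le> norm u * M" by simp
  qed
  from riesz[OF this] obtain y where y: "\<And>z. f z = y \<bullet> z" by blast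
  show ?thesis unfolding weakly_convergent_def using flim y by metis
qed

end
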